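(* Let $q\in(0,\tfrac12)$ and $T,S\in\mathbb{R}$, and set $$P_{T,S}(x)=(T+S-1)x^3+\big(1-T-2S+q(S-1-T)\big)x^2+\big(S+q(T-S)\big)x,$$ $X=(1-q)(T-1)+qS$ and $Y=q(T-1)+(1-q)S$. Then $P_{T,S}$ has exactly three distinct roots in $[0,1]$ if and only if $$X<0\quad\text{and}\quad -\frac{X^2}{4q}-q<Y<-q.$$ *)

theory Defs
  imports Complex_Main
begin

definition P_TS :: "real \<Rightarrow> real \<Rightarrow> real \<Rightarrow> real \<Rightarrow> real" where
  "P_TS q T S x = (T + S - 1) * x ^ 3 + (1 - T - 2 * S + q * (S - 1 - T)) * x ^ 2
                  + (S + q * (T - S)) * x"

end

theory Submission
  imports Defs
begin

lemma vieta:
  fixes a b c r s :: real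
  assumes "a*r^2+b*r+c=0" "a*s^2+b*s+c=0" "r\<noteq>s"
  shows "b = -a*(r+s) \<and> c = a*r*s"
proof -
  have "(r-s)*(a*(r+s)+b) = 0" using assms(1,2) by (simp add: algebra_simps power2_eq_square)
  then have hb: "b = -a*(r+s)" using assms(3) by simp
  have "c = -(a*r^2) - b*r" using assms(1) by linarith
  also have "\<dots> = a*r*s" unfolding hb by (simp add: algebra_simps power2_eq_square)
  finally have "c = a*r*s" .
  with hb show ?thesis by simp
qed

lemma three_roots_false:
  fixes a b c r s x :: real
  assumes "a \<noteq> 0" "a*r^2+b*r+c=0" "a*s^2+b*s+c=0" "a*x^2+b*x+c=0" "r\<noteq>s" "x\<noteq>r" "x\<noteq>s"
  shows False
proof -
  from vieta[OF assms(2,3,5)] have hb: "b = -a*(r+s)" and hc: "c = a*r*s" by auto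
  have "a*((x-r)*(x-s)) = a*x^2+b*x+c" unfolding hb hc by (simp add: algebra_simps power2_eq_square)
  then have "a*((x-r)*(x-s)) = 0" using assms(4) by simp
  with assms show False by simp
qed

lemma two_roots:
  fixes a b c :: real
  assumes "a<0" "c<0" "a+b+c<0" "b>0" "2*a+b<0" "b^2-4*a*c>0"
  shows "\<exists>r s. 0<r \<and> r<s \<and> s<1 \<and> a*r^2+b*r+c=0 \<and> a*s^2+b*s+c=0"
proof -
  define Q where "Q = (\<lambda>x::real. a*x^2+b*x+c)"
  define x0 where "x0 = -b/(2*a)"
  have x0p: "0 < x0" using assms unfolding x0_def by (simp add: divide_pos_neg)
  have x01: "x0 < 1" using assms unfolding x0_def by (simp add: field_simps)
  have "4*a*Q x0 = 4*a*c - b^2" unfolding Q_def x0_def using assms(1)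
    by (simp add: field_simps power2_eq_square)
  then have "(4*a)*Q x0 < 0" using assms(6) by simp
  then have Qx0: "Q x0 > 0" using assms(1) by (simp add: mult_less_0_iff)
  have cont: "\<And>x. isCont Q x" unfolding Q_def by (intro continuous_intros)
  have Q0: "Q 0 < 0" and Q1: "Q 1 < 0" using assms unfolding Q_def by auto
  obtain r where r: "0 \<le> r" "r \<le> x0" "Q r = 0"
    using IVT[of Q 0 0 x0] Q0 Qx0 x0p cont by force
  obtain s where s: "x0 \<le> s" "s \<le> 1" "Q s = 0"
    using IVT2[of Q 1 0 x0] Q1 Qx0 x01 cont by force
  have "r \<noteq> 0" "r \<noteq> x0" "s \<noteq> x0" "s \<noteq> 1" using r s Q0 Qx0 Q1 by auto
  then show ?thesis using r s unfolding Q_def by (intro exI[of _ r] exI[of _ s]) auto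
qed

lemma P_eq:
  "P_TS q T S x = x * ((((1 - q) * (T - 1) + q * S) + (q * (T - 1) + (1 - q) * S))*x^2
     + (-(((1 - q) * (T - 1) + q * S) + 2*(q * (T - 1) + (1 - q) * S) + 2*q))*x
     + ((q * (T - 1) + (1 - q) * S)+q))"
  by (simp add: P_TS_def power2_eq_square power3_eq_cube algebra_simps)

theorem mainTheorem6:
  fixes q T S :: real
  assumes "0 < q" and "q < 1 / 2"
  defines "X \<equiv> (1 - q) * (T - 1) + q * S"
      and "Y \<equiv> q * (T - 1) + (1 - q) * S"
  shows "(finite {x \<in> {0..1}. P_TS q T S x = 0} \<and> card {x \<in> {0..1}. P_TS q T S x = 0} = 3)
         \<longleftrightarrow> (X < 0 \<and> - (X ^ 2) / (4 * q) - q < Y \<and> Y < - q)"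
proof -
  define a where "a = X+Y"
  define b where "b = -(X+2*Y+2*q)"
  define c where "c = Y+q"
  have PE: "\<And>x. P_TS q T S x = x * (a*x^2+b*x+c)"
    unfolding a_def b_def c_def X_def Y_def by (rule P_eq)
  define A where "A = {x \<in> {0..1::real}. P_TS q T S x = 0}"
  have Q1: "a+b+c = -q" unfolding a_def b_def c_def by simp
  have root: "\<And>x. x \<in> A \<Longrightarrow> x \<noteq> 0 \<Longrightarrow> 0 < x \<and> x < 1 \<and> a*x^2+b*x+c = 0"
  proof -
    fix x assume "x \<in> A" "x \<noteq> 0"
    then have "0 \<le> x" "x \<le> 1" "a*x^2+b*x+c = 0" unfolding A_def PE by auto
    moreover have "x \<noteq> 1" using \<open>a*x^2+b*x+c = 0\<close> Q1 assms(1) by auto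
    ultimately show "0 < x \<and> x < 1 \<and> a*x^2+b*x+c = 0" using \<open>x\<noteq>0\<close> by auto
  qed
  have fwd: "X < 0 \<and> - (X ^ 2) / (4 * q) - q < Y \<and> Y < - q"
    if r: "0<r" "r<1" "a*r^2+b*r+c = 0" and s: "0<s" "s<1" "a*s^2+b*s+c = 0" and rs: "r \<noteq> s" for r s
  proof -
    from vieta[OF r(3) s(3) rs] have hb: "b = -a*(r+s)" and hc: "c = a*r*s" by auto
    have "a*((1-r)*(1-s)) = -q" using Q1 hb hc by (simp add: algebra_simps)
    moreover have "(1-r)*(1-s) > 0" using r s by simp
    ultimately have an: "a < 0" using assms(1)
      by (smt (verit) mult_nonneg_nonneg)
    have rs0: "r*s > 0" using r s by simp
    have cn: "c < 0" using hc an rs0 by (simp add: mult_neg_pos mult.assoc)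
    have bp: "b > 0" using hb an r s by (simp add: mult_neg_pos)
    have "2*a+b = a*((1-r)+(1-s))" using hb by (simp add: algebra_simps)
    moreover have "(1-r)+(1-s) > 0" using r s by simp
    ultimately have b2: "2*a+b < 0" using an by (simp add: mult_neg_pos)
    have "b^2-4*a*c = a^2*(r-s)^2" unfolding hb hc by (simp add: algebra_simps power2_eq_square)
    moreover have "a^2*(r-s)^2 > 0" using an rs by simp
    ultimately have disc: "b^2-4*a*c > 0" by simp
    have Yq: "Y < -q" using cn unfolding c_def by simp
    have d2: "X^2 + 4*q^2 + 4*q*Y > 0" using disc unfolding a_def b_def c_def
      by (simp add: algebra_simps power2_eq_square)
    have bb: "X + 2*Y + 2*q < 0" using bp unfolding b_def by simp
    have Xn: "X < 0"
    proof (rule ccontr)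
      assume "\<not> X < 0"
      then have X0: "X \<ge> 0" by simp
      have X2: "X < 2*q" using b2 unfolding a_def b_def by simp
      have "2*(Y+q) < -X" using bb by (smt (verit))
      then have "(2*q)*(2*(Y+q)) < (2*q)*(-X)" using assms(1) by (intro mult_strict_left_mono) auto
      then have "4*q*(Y+q) < -2*q*X" by (simp add: algebra_simps)
      moreover have "X^2 \<le> 2*q*X" using X0 X2 by (simp add: power2_eq_square mult_right_mono)
      ultimately show False using d2 by (simp add: algebra_simps power2_eq_square)
    qed
    have "- (X ^ 2) / (4 * q) - q < Y"
    proof -
      have "- (X ^ 2) / (4 * q) = - (X^2) * (1/(4*q))" by simp
      have "-(X^2) < 4*q*(Y+q)" using d2 by (simp add: algebra_simps power2_eq_square)
      moreover have "4*q > 0" using assms(1) by simp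
      ultimately have "- (X ^ 2) / (4 * q) < Y + q" using pos_divide_less_eq[of "4*q" "-(X^2)" "Y+q"] by (metis mult.commute)
      then show ?thesis by simp
    qed
    then show ?thesis using Xn Yq by simp
  qed
  show ?thesis
  proof
    assume h: "finite {x \<in> {0..1}. P_TS q T S x = 0} \<and> card {x \<in> {0..1}. P_TS q T S x = 0} = 3"
    then obtain x y z where xyz: "A = {x,y,z}" "x\<noteq>y" "y\<noteq>z" "x\<noteq>z"
      unfolding A_def[symmetric] by (auto simp: card_3_iff)
    have "x \<in> A" "y \<in> A" "z \<in> A" using xyz by auto
    show "X < 0 \<and> - (X ^ 2) / (4 * q) - q < Y \<and> Y < - q"
    proof (cases "x = 0")
      case True
      then show ?thesis using fwd[OF _ _ _ _ _ _ \<open>y\<noteq>z\<close>] root[OF \<open>y\<in>A\<close>] root[OF \<open>z\<in>A\<close>] xyz by auto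
    next
      case xn: False
      show ?thesis
      proof (cases "y = 0")
        case True
        then show ?thesis using fwd[OF _ _ _ _ _ _ \<open>x\<noteq>z\<close>] root[OF \<open>x\<in>A\<close>] root[OF \<open>z\<in>A\<close>] xyz xn by auto
      next
        case False
        then show ?thesis using fwd[OF _ _ _ _ _ _ \<open>x\<noteq>y\<close>] root[OF \<open>x\<in>A\<close>] root[OF \<open>y\<in>A\<close>] xn by auto
      qed
    qed
  next
    assume h: "X < 0 \<and> - (X ^ 2) / (4 * q) - q < Y \<and> Y < - q"
    have an: "a < 0" and cn: "c < 0" using h assms(1) unfolding a_def c_def by auto
    have bp: "b > 0" using h unfolding b_def by simp
    have b2: "2*a+b < 0"
    proof -
      have "X < 0" using h by simp
      then show ?thesis using assms(1) unfolding a_def b_def by (smt (verit))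
    qed
    have "-(X^2) < 4*q*(Y+q)"
    proof -
      have "- (X ^ 2) / (4 * q) < Y + q" using h by simp
      moreover have "4*q > 0" using assms(1) by simp
      ultimately show ?thesis using pos_divide_less_eq[of "4*q" "-(X^2)" "Y+q"] by (metis mult.commute)
    qed
    then have disc: "b^2-4*a*c > 0" unfolding a_def b_def c_def
      by (simp add: algebra_simps power2_eq_square)
    obtain r s where rs: "0<r" "r<s" "s<1" "a*r^2+b*r+c=0" "a*s^2+b*s+c=0"
      using two_roots[OF an cn _ bp b2 disc] Q1 assms(1) by auto
    have "A = {0, r, s}"
    proof
      show "{0, r, s} \<subseteq> A" unfolding A_def PE using rs by auto
      show "A \<subseteq> {0, r, s}"
      proof
        fix x assume "x \<in> A"
        show "x \<in> {0, r, s}"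
        proof (rule ccontr)
          assume "x \<notin> {0, r, s}"
          then have "x \<noteq> 0" "x \<noteq> r" "x \<noteq> s" by auto
          with root[OF \<open>x\<in>A\<close>] have "a*x^2+b*x+c = 0" by auto
          moreover have "a \<noteq> 0" "r \<noteq> s" using an rs by auto
          ultimately show False using three_roots_false rs(4,5) \<open>x \<noteq> r\<close> \<open>x \<noteq> s\<close> by metis
        qed
      qed
    qed
    then show "finite {x \<in> {0..1}. P_TS q T S x = 0} \<and> card {x \<in> {0..1}. P_TS q T S x = 0} = 3"
      unfolding A_def[symmetric] using rs by auto
  qed
qed

end
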